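(* Let $F=\{f_i\}_{i=1}^N$ be a frame for an $n$-dimensional Hilbert space $\mathcal{H}_n$ with frame operator $S_F$. Let $L=\max\{\|f_i\|\,\|S_F^{-1}f_i\|:1\le i\le N\}$, $\eta_1=\{i:\|f_i\|\,\|S_F^{-1}f_i\|=L\}$, $\eta_2=\{1,\dots,N\}\setminus\eta_1$, and $H_j=\mathrm{span}\{f_i:i\in\eta_j\}$ for $j=1,2$. Assume (i) $H_1\cap H_2=\{0\}$; (ii) $\|f_i\|=c$ for all $i\in\eta_1$, for some constant $c>0$; (iii) the set $\{f_i:i\in\eta_2\}$ is linearly independent. Then for every $p>2$ the canonical dual frame $S_F^{-1}F=\{S_F^{-1}f_i\}_{i=1}^N$ is a $1$-erasure Frobenius-optimal dual of $F$, i.e. $S_F^{-1}F\in\zeta_{\mathfrak{F}}^{(1),p}(F)$.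
   Context: $F$ is a frame for $\mathcal{H}_n$ if there are $0<A'\le B'$ with $A'\|f\|^2\le\sum_i|\langle f,f_i\rangle|^2\le B'\|f\|^2$ for all $f$. Analysis operator $T_Ff=(\langle f,f_i\rangle)_{i=1}^N$, frame operator $S_F=T_F^*T_F$ (positive invertible). $G=\{g_i\}_{i=1}^N$ is a dual of $F$ if $f=\sum_i\langle f,f_i\rangle g_i$ for all $f\in\mathcal{H}_n$. For a dual $G$ and $p>1$, $\mathrm{AE}_{\mathfrak{F}}^{(1),p}(F,G)=\{\frac1N\sum_{D\in\mathcal{D}^{(1)}}\|T_G^*DT_F\|_{\mathfrak{F}}^p\}^{1/p}=\{\frac1N\sum_{i=1}^N(\|f_i\|\,\|g_i\|)^p\}^{1/p}$, where $\mathcal{D}^{(1)}$ is the set of $N\times N$ diagonal matrices with exactly one diagonal entry $1$ and the rest $0$, and $\|\cdot\|_{\mathfrak{F}}$ is the Frobenius norm. $\zeta_{\mathfrak{F}}^{(1),p}(F)$ is the set of duals $G$ of $F$ minimizing $\mathrm{AE}_{\mathfrak{F}}^{(1),p}(F,G)$ over all duals of $F$. *)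

theory Defs
  imports "HOL-Analysis.Analysis"
begin

text \<open>The n-dimensional Hilbert space H_n is modelled as complex^'n with the
standard inner product (linear in the first argument); its norm is the
library norm on complex^'n. Frames are families f :: nat => complex^'n indexed by 1..N.\<close>

definition cinner :: "complex^'n \<Rightarrow> complex^'n \<Rightarrow> complex" where
  "cinner x y = (\<Sum>j\<in>UNIV. x $ j * cnj (y $ j))"

definition is_frame :: "(nat \<Rightarrow> complex^'n) \<Rightarrow> nat \<Rightarrow> bool" where
  "is_frame F N \<longleftrightarrow> (\<exists>A B. 0 < A \<and> A \<le> B \<and>
     (\<forall>x. A * (norm x)^2 \<le> (\<Sum>i\<in>{1..N}. (cmod (cinner x (F i)))^2) \<and>
          (\<Sum>i\<in>{1..N}. (cmod (cinner x (F i)))^2) \<le> B * (norm x)^2))"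

definition frame_op :: "(nat \<Rightarrow> complex^'n) \<Rightarrow> nat \<Rightarrow> complex^'n \<Rightarrow> complex^'n" where
  "frame_op F N x = (\<Sum>i\<in>{1..N}. cinner x (F i) *s F i)"

definition frame_op_inv :: "(nat \<Rightarrow> complex^'n) \<Rightarrow> nat \<Rightarrow> complex^'n \<Rightarrow> complex^'n" where
  "frame_op_inv F N = inv (frame_op F N)"

definition is_dual :: "(nat \<Rightarrow> complex^'n) \<Rightarrow> (nat \<Rightarrow> complex^'n) \<Rightarrow> nat \<Rightarrow> bool" where
  "is_dual F G N \<longleftrightarrow> (\<forall>x. x = (\<Sum>i\<in>{1..N}. cinner x (F i) *s G i))"

definition AE1p :: "real \<Rightarrow> (nat \<Rightarrow> complex^'n) \<Rightarrow> (nat \<Rightarrow> complex^'n) \<Rightarrow> nat \<Rightarrow> real" where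
  "AE1p p F G N = ((1 / real N) * (\<Sum>i\<in>{1..N}. (norm (F i) * norm (G i)) powr p)) powr (1 / p)"

definition optimal_dual_1p :: "real \<Rightarrow> (nat \<Rightarrow> complex^'n) \<Rightarrow> nat \<Rightarrow> (nat \<Rightarrow> complex^'n) \<Rightarrow> bool" where
  "optimal_dual_1p p F N G \<longleftrightarrow> is_dual F G N \<and>
     (\<forall>G'. is_dual F G' N \<longrightarrow> AE1p p F G N \<le> AE1p p F G' N)"

end

theory Submission
  imports Defs
begin


lemma cinner_re: "Re (cinner x y) = inner x y"
  unfolding cinner_def inner_vec_def inner_complex_def by (simp add: Re_sum)

lemma cinner_add_left: "cinner (x + y) z = cinner x z + cinner y z"
  unfolding cinner_def by (simp add: distrib_right sum.distrib)
lemma cinner_scale_left: "cinner (c *s x) z = c * cinner x z"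
  unfolding cinner_def by (simp add: sum_distrib_left mult.assoc)
lemma cinner_sum_left: "cinner (sum f A) z = (\<Sum>a\<in>A. cinner (f a) z)"
  unfolding cinner_def by (simp add: sum_distrib_right sum.swap[of _ A])
lemma cinner_commute: "cinner y x = cnj (cinner x y)"
  unfolding cinner_def by (simp add: mult.commute)
lemma cinner_scale_right: "cinner x (c *s z) = cnj c * cinner x z"
  unfolding cinner_def by (simp add: sum_distrib_left algebra_simps)
lemma cinner_sum_right: "cinner z (sum f A) = (\<Sum>a\<in>A. cinner z (f a))"
  unfolding cinner_def by (simp add: sum_distrib_left sum.swap[of _ A] cnj_sum)
lemma cinner_zero_left[simp]: "cinner 0 z = 0"
  unfolding cinner_def by simp
lemma cinner_self: "Re (cinner x x) = (norm x)^2"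
  by (simp add: cinner_re power2_norm_eq_inner)

lemma frame_op_linear: "Vector_Spaces.linear (*s) (*s) (frame_op F N)"
  unfolding Vector_Spaces.linear_iff frame_op_def
  by (auto simp: vec.vector_space_axioms cinner_add_left cinner_scale_left vec.scale_left_distrib sum.distrib vec.scale_sum_right)

lemma frame_op_selfadj: "cinner (frame_op F N x) y = cinner x (frame_op F N y)"
  unfolding frame_op_def cinner_sum_left cinner_sum_right cinner_scale_left cinner_scale_right
  by (rule sum.cong) (auto simp: cinner_commute[of "F _" y] mult.commute)

lemma frame_op_quad: "Re (cinner (frame_op F N x) x) = (\<Sum>i\<in>{1..N}. (cmod (cinner x (F i)))^2)"
proof -
  have "cinner (frame_op F N x) x = (\<Sum>i\<in>{1..N}. cinner x (F i) * cnj (cinner x (F i)))"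
    unfolding frame_op_def cinner_sum_left cinner_scale_left
    by (rule sum.cong) (auto simp: cinner_commute[of "F _" x])
  also have "\<dots> = (\<Sum>i\<in>{1..N}. complex_of_real ((cmod (cinner x (F i)))^2))"
    by (rule sum.cong) (simp_all only: complex_norm_square)
  finally show ?thesis by (simp add: Re_sum)
qed

lemma frame_op_bij:
  assumes "is_frame F N"
  shows "bij (frame_op F N)"
proof -
  let ?S = "frame_op F N"
  obtain A B where A: "0 < A" and bnd: "\<And>x. A * (norm x)^2 \<le> (\<Sum>i\<in>{1..N}. (cmod (cinner x (F i)))^2)"
    using assms unfolding is_frame_def by blast
  interpret S: Vector_Spaces.linear "(*s)" "(*s)" ?S by (rule frame_op_linear)
  have z: "x = 0" if "?S x = 0" for x
  proof -
    have "A * (norm x)^2 \<le> 0" using bnd[of x] frame_op_quad[of F N x] that by simp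
    with A have "(norm x)^2 \<le> 0" by (simp add: mult_le_0_iff)
    then show ?thesis by simp
  qed
  have inj: "inj ?S"
  proof (rule injI)
    fix x y assume "?S x = ?S y"
    then have "?S (x - y) = 0" by (simp add: S.diff)
    then show "x = y" using z by fastforce
  qed
  moreover have "surj ?S" by (rule vec.linear_inj_imp_surj[OF frame_op_linear inj])
  ultimately show ?thesis by (simp add: bij_def)
qed

lemma cinner_axis: "cinner (axis k 1) f = cnj (f $ k)"
proof -
  have "\<And>j. (axis k 1) $ j * cnj (f $ j) = (if j = k then cnj (f $ k) else 0)"
    by (simp add: axis_def)
  then show ?thesis unfolding cinner_def by simp
qed

locale frm =
  fixes F :: "nat \<Rightarrow> complex^'n" and N :: nat
  assumes frame: "is_frame F N"
begin

abbreviation "S \<equiv> frame_op F N"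
abbreviation "M \<equiv> frame_op_inv F N"

lemma S_lin: "Vector_Spaces.linear (*s) (*s) S" by (rule frame_op_linear)

lemma SM: "S (M y) = y"
  unfolding frame_op_inv_def using frame_op_bij[OF frame] by (simp add: bij_is_surj surj_f_inv_f)
lemma MS: "M (S y) = y"
  unfolding frame_op_inv_def using frame_op_bij[OF frame] by (simp add: bij_is_inj inv_f_f)

lemma M_lin: "Vector_Spaces.linear (*s) (*s) M"
proof -
  interpret S: Vector_Spaces.linear "(*s)" "(*s)" S by (rule S_lin)
  show ?thesis unfolding Vector_Spaces.linear_iff
  proof (intro conjI allI vec.vector_space_axioms)
    fix x y
    have "M (x + y) = M (S (M x) + S (M y))" by (simp add: SM)
    also have "\<dots> = M x + M y" by (simp add: S.add[symmetric] MS)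
    finally show "M (x + y) = M x + M y" .
  next
    fix c x
    have "M (c *s x) = M (c *s S (M x))" by (simp add: SM)
    also have "\<dots> = c *s M x" by (simp add: S.scale[symmetric] MS)
    finally show "M (c *s x) = c *s M x" .
  qed
qed

lemma M_selfadj: "cinner (M a) b = cinner a (M b)"
proof -
  have "cinner (M a) b = cinner (M a) (S (M b))" by (simp add: SM)
  also have "\<dots> = cinner (S (M a)) (M b)" by (simp add: frame_op_selfadj)
  finally show ?thesis by (simp add: SM)
qed

lemma canon_dual: "is_dual F (\<lambda>i. M (F i)) N"
  unfolding is_dual_def
proof
  fix x
  interpret Lm: Vector_Spaces.linear "(*s)" "(*s)" M by (rule M_lin)
  have "(\<Sum>i\<in>{1..N}. cinner x (F i) *s M (F i)) = M (S x)"
    unfolding frame_op_def by (simp add: Lm.sum Lm.scale)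
  then show "x = (\<Sum>i\<in>{1..N}. cinner x (F i) *s M (F i))" by (simp add: MS)
qed

lemma trace0:
  assumes U: "\<And>x. (\<Sum>i\<in>{1..N}. cinner x (F i) *s U i) = 0"
  shows "(\<Sum>i\<in>{1..N}. cinner (U i) (M (F i))) = 0"
proof -
  interpret Lm: Vector_Spaces.linear "(*s)" "(*s)" M by (rule M_lin)
  have "(\<Sum>i\<in>{1..N}. cinner (U i) (M (F i))) = (\<Sum>i\<in>{1..N}. cinner (M (U i)) (F i))"
    by (rule sum.cong) (simp_all add: M_selfadj)
  also have "\<dots> = (\<Sum>k\<in>UNIV. (\<Sum>i\<in>{1..N}. cnj (F i $ k) *s M (U i)) $ k)"
    unfolding cinner_def by (simp add: mult.commute sum_component) (rule sum.swap)
  also have "\<dots> = (\<Sum>k\<in>UNIV. (M (\<Sum>i\<in>{1..N}. cinner (axis k 1) (F i) *s U i)) $ k)"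
    by (simp add: cinner_axis Lm.sum Lm.scale)
  also have "\<dots> = 0" by (simp only: U Lm.zero) simp
  finally show ?thesis .
qed

end



lemma tangent_real:
  fixes t r p :: real
  assumes p: "p \<ge> 1" and r: "r > 0" and t: "t \<ge> 0"
  shows "t powr p \<ge> r powr p + p * r powr (p - 1) * (t - r)"
proof (cases "t = 0")
  case True
  have "r powr p = r powr (p - 1) * r" using r by (simp add: powr_diff)
  hence "r powr p + p * r powr (p - 1) * (t - r) = (1 - p) * r powr p" using True by (simp add: algebra_simps)
  also have "\<dots> \<le> 0" using p by (simp add: mult_nonpos_nonneg)
  finally show ?thesis using True by simp
next
  case False
  have "t powr p - r powr p \<ge> (p * r powr (p - 1)) * (t - r)"
  proof (rule convex_on_imp_above_tangent[where A="{0<..}"])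
    show "convex_on {0<..} (\<lambda>x. x powr p)" by (rule powr_convex[OF p])
    show "connected {0::real<..}" by simp
    show "r \<in> interior {0<..}" using r by (simp add: interior_open)
    show "t \<in> {0<..}" using t False by simp
    show "((\<lambda>x. x powr p) has_field_derivative p * r powr (p - 1)) (at r within {0<..})"
      by (rule has_field_derivative_at_within) (rule has_real_derivative_powr[OF r])
  qed
  then show ?thesis by simp
qed

lemma tangent_vec:
  fixes g u :: "'a::real_inner" and p c :: real
  assumes p: "p \<ge> 1" and c: "c \<ge> 0"
  shows "(c * norm (g + u)) powr p \<ge> (c * norm g) powr p + p * c powr p * norm g powr (p - 2) * inner u g"
proof -
  let ?t = "norm (g + u)" and ?r = "norm g"
  have key: "?t powr p \<ge> ?r powr p + p * ?r powr (p - 2) * inner u g"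
  proof (cases "g = 0")
    case True then show ?thesis by simp
  next
    case False
    hence r: "?r > 0" by simp
    have "inner (g + u) g \<le> ?t * ?r" by (rule norm_cauchy_schwarz)
    moreover have "inner (g + u) g = ?r^2 + inner u g" by (simp add: inner_add_left power2_norm_eq_inner)
    ultimately have "?r^2 + inner u g \<le> ?t * ?r" by simp
    hence "inner u g / ?r \<le> ?t - ?r" using r by (simp add: field_simps power2_eq_square)
    moreover have "p * ?r powr (p - 1) \<ge> 0" using p by simp
    ultimately have "p * ?r powr (p - 1) * (inner u g / ?r) \<le> p * ?r powr (p - 1) * (?t - ?r)"
      by (rule mult_left_mono)
    moreover have "?r powr (p - 1) * (inner u g / ?r) = ?r powr (p - 2) * inner u g"
    proof -
      have "?r powr ((p - 2) + 1) = ?r powr (p - 2) * ?r powr 1" by (rule powr_add)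
      hence "?r powr (p - 2) * ?r = ?r powr ((p - 2) + 1)" by simp
      hence "?r powr (p - 1) = ?r powr (p - 2) * ?r" by simp
      thus ?thesis using r by simp
    qed
    ultimately have "p * ?r powr (p - 2) * inner u g \<le> p * ?r powr (p - 1) * (?t - ?r)"
      by (metis mult.assoc)
    moreover have "?t powr p \<ge> ?r powr p + p * ?r powr (p - 1) * (?t - ?r)"
      by (rule tangent_real[OF p r norm_ge_zero])
    ultimately show ?thesis by linarith
  qed
  have "c powr p * (?r powr p + p * ?r powr (p - 2) * inner u g) \<le> c powr p * ?t powr p"
    by (rule mult_left_mono[OF key]) simp
  then show ?thesis using c by (simp add: powr_mult algebra_simps)
qed


lemma scaleR_smult: "c *\<^sub>R (x::complex^'n) = complex_of_real c *s x"
  by (vector scaleR_conv_of_real)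

lemma vspan_subspace: "subspace (vec.span (X :: (complex^'n) set))"
  unfolding subspace_def
  by (auto simp: scaleR_smult vec.span_zero vec.span_add vec.span_scale)

lemma eta2_zero:
  fixes F :: "nat \<Rightarrow> complex^'n" and U :: "nat \<Rightarrow> complex^'n"
  assumes U: "\<And>x. (\<Sum>i\<in>{1..N}. cinner x (F i) *s U i) = 0"
    and e1: "\<eta>1 \<subseteq> {1..N}" and e2: "\<eta>2 = {1..N} - \<eta>1"
    and hyp_i: "vec.span (F ` \<eta>1) \<inter> vec.span (F ` \<eta>2) = {0}"
    and inj: "inj_on F \<eta>2" and ind: "vec.independent (F ` \<eta>2)"
    and j: "j \<in> \<eta>2"
  shows "U j = 0"
proof -
  define V where "V = vec.span (F ` ({1..N} - {j}))"
  have jN: "j \<in> {1..N}" using j e2 by auto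
  have notin: "F j \<notin> V"
  proof
    assume "F j \<in> V"
    have "{1..N} - {j} = \<eta>1 \<union> (\<eta>2 - {j})" using e1 e2 j by auto
    hence "V = vec.span (F ` \<eta>1 \<union> F ` (\<eta>2 - {j}))" unfolding V_def by (simp add: image_Un)
    with \<open>F j \<in> V\<close> obtain a b where ab: "F j = a + b" "a \<in> vec.span (F ` \<eta>1)" "b \<in> vec.span (F ` (\<eta>2 - {j}))"
      by (auto simp: vec.span_Un)
    have bH2: "b \<in> vec.span (F ` \<eta>2)" using ab(3) vec.span_mono[of "F ` (\<eta>2 - {j})" "F ` \<eta>2"] by auto
    have "F j \<in> vec.span (F ` \<eta>2)" using j by (simp add: vec.span_base)
    hence "a \<in> vec.span (F ` \<eta>2)" using bH2 ab(1) vec.span_diff[of "F j" _ b] by force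
    hence "a = 0" using ab(2) hyp_i by auto
    hence "F j \<in> vec.span (F ` \<eta>2 - {F j})" using ab inj j by (simp add: inj_on_image_set_diff)
    hence "vec.dependent (F ` \<eta>2)" unfolding vec.dependent_def using j by blast
    with ind show False by simp
  qed
  have sub: "subspace V" unfolding V_def by (rule vspan_subspace)
  obtain y z where y: "y \<in> span V" and z: "\<And>w. w \<in> span V \<Longrightarrow> orthogonal z w" and yz: "F j = y + z"
    using orthogonal_subspace_decomp_exists[of V "F j"] by metis
  have spV: "span V = V" using sub by simp
  have "z \<noteq> 0" using yz y notin spV by auto
  have "inner z (F j) = inner z y + inner z z" by (simp add: yz inner_add_right)
  also have "inner z y = 0" using z[OF y] by (simp add: orthogonal_def)
  finally have "inner z (F j) = inner z z" by simp
  with \<open>z \<noteq> 0\<close> have nz: "cinner z (F j) \<noteq> 0" by (metis cinner_re inner_eq_zero_iff zero_complex.simps(1))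
  have others: "cinner z (F i) = 0" if "i \<in> {1..N} - {j}" for i
  proof -
    have Fi: "F i \<in> V" unfolding V_def using that by (simp add: vec.span_base)
    hence "\<i> *s F i \<in> V" unfolding V_def by (rule vec.span_scale)
    hence "inner z (\<i> *s F i) = 0" using z spV by (simp add: orthogonal_def)
    hence im: "Im (cinner z (F i)) = 0" by (simp add: cinner_re[symmetric] cinner_scale_right)
    have "inner z (F i) = 0" using z spV Fi by (simp add: orthogonal_def)
    hence "Re (cinner z (F i)) = 0" by (simp add: cinner_re)
    with im show ?thesis by (simp add: complex_eq_iff)
  qed
  have "0 = (\<Sum>i\<in>{1..N}. cinner z (F i) *s U i)" using U by simp
  also have "\<dots> = cinner z (F j) *s U j + (\<Sum>i\<in>{1..N} - {j}. cinner z (F i) *s U i)"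
    using jN by (simp add: sum.remove)
  also have "(\<Sum>i\<in>{1..N} - {j}. cinner z (F i) *s U i) = 0"
    by (rule sum.neutral) (simp add: others)
  finally have "cinner z (F j) *s U j = 0" by simp
  with nz show ?thesis by (simp add: vec.scale_eq_0_iff)
qed



theorem theorem3p2:
  fixes F :: "nat \<Rightarrow> complex^'n" and N :: nat and p :: real
    and L :: real and \<eta>1 \<eta>2 :: "nat set" and H1 H2 :: "(complex^'n) set"
  assumes frame: "is_frame F N"
    and L_def: "L = Max ((\<lambda>i. norm (F i) * norm (frame_op_inv F N (F i))) ` {1..N})"
    and eta1_def: "\<eta>1 = {i \<in> {1..N}. norm (F i) * norm (frame_op_inv F N (F i)) = L}"
    and eta2_def: "\<eta>2 = {1..N} - \<eta>1"
    and H1_def: "H1 = vec.span (F ` \<eta>1)"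
    and H2_def: "H2 = vec.span (F ` \<eta>2)"
    and hyp_i: "H1 \<inter> H2 = {0}"
    and hyp_ii: "\<exists>c>0. \<forall>i\<in>\<eta>1. norm (F i) = c"
    and hyp_iii: "inj_on F \<eta>2 \<and> vec.independent (F ` \<eta>2)"
    and p: "p > 2"
  shows "optimal_dual_1p p F N (\<lambda>i. frame_op_inv F N (F i))"
proof -
  interpret frm F N by unfold_locales (rule frame)
  let ?M = "frame_op_inv F N"
  have dualG: "is_dual F (\<lambda>i. ?M (F i)) N" by (rule canon_dual)
  obtain c where c: "c > 0" "\<And>i. i \<in> \<eta>1 \<Longrightarrow> norm (F i) = c" using hyp_ii by blast
  have e1: "\<eta>1 \<subseteq> {1..N}" using eta1_def by auto
  have un: "{1..N} = \<eta>1 \<union> \<eta>2" and dj: "\<eta>1 \<inter> \<eta>2 = {}" using e1 eta2_def by auto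
  have fin1: "finite \<eta>1" and fin2: "finite \<eta>2" using e1 eta2_def finite_subset by auto
  have "AE1p p F (\<lambda>i. ?M (F i)) N \<le> AE1p p F G' N" if G': "is_dual F G' N" for G'
  proof -
    define U where "U i = G' i - ?M (F i)" for i
    have G'U: "G' i = ?M (F i) + U i" for i by (simp add: U_def)
    have Ucon: "(\<Sum>i\<in>{1..N}. cinner x (F i) *s U i) = 0" for x
    proof -
      have "(\<Sum>i\<in>{1..N}. cinner x (F i) *s U i) =
            (\<Sum>i\<in>{1..N}. cinner x (F i) *s G' i) - (\<Sum>i\<in>{1..N}. cinner x (F i) *s ?M (F i))"
        unfolding U_def by (simp add: vec.scale_right_diff_distrib sum_subtractf)
      also have "\<dots> = x - x" using G' dualG unfolding is_dual_def by metis
      finally show ?thesis by simp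
    qed
    have U2: "U j = 0" if "j \<in> \<eta>2" for j
      by (rule eta2_zero[OF Ucon e1 eta2_def _ _ _ that])
         (use hyp_i hyp_iii H1_def H2_def in auto)
    define K where "K = p * c powr p * (L / c) powr (p - 2)"
    have tr: "(\<Sum>i\<in>\<eta>1. inner (U i) (?M (F i))) = 0"
    proof -
      have "(\<Sum>i\<in>\<eta>1. cinner (U i) (?M (F i))) = (\<Sum>i\<in>{1..N}. cinner (U i) (?M (F i)))"
        unfolding un using fin1 fin2 dj U2 by (simp add: sum.union_disjoint)
      also have "\<dots> = 0" by (rule trace0[OF Ucon])
      finally show ?thesis by (simp add: cinner_re[symmetric] Re_sum[symmetric])
    qed
    have t1: "(norm (F i) * norm (?M (F i))) powr p + K * inner (U i) (?M (F i))
              \<le> (norm (F i) * norm (G' i)) powr p" if i: "i \<in> \<eta>1" for i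
    proof -
      have nF: "norm (F i) = c" using c i by simp
      have "norm (F i) * norm (?M (F i)) = L" using i eta1_def by auto
      hence nM: "norm (?M (F i)) = L / c" using nF c by (simp add: field_simps)
      show ?thesis
        using tangent_vec[of p c "?M (F i)" "U i"] p c nF nM unfolding K_def G'U by simp
    qed
    have "(\<Sum>i\<in>{1..N}. (norm (F i) * norm (?M (F i))) powr p)
        = (\<Sum>i\<in>\<eta>1. (norm (F i) * norm (?M (F i))) powr p) + (\<Sum>i\<in>\<eta>2. (norm (F i) * norm (?M (F i))) powr p)"
      unfolding un using fin1 fin2 dj by (simp add: sum.union_disjoint)
    also have "(\<Sum>i\<in>\<eta>1. (norm (F i) * norm (?M (F i))) powr p)
        = (\<Sum>i\<in>\<eta>1. (norm (F i) * norm (?M (F i))) powr p + K * inner (U i) (?M (F i)))"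
      by (simp add: sum.distrib sum_distrib_left[symmetric] tr)
    also have "\<dots> \<le> (\<Sum>i\<in>\<eta>1. (norm (F i) * norm (G' i)) powr p)"
      by (rule sum_mono) (rule t1)
    also have "(\<Sum>i\<in>\<eta>2. (norm (F i) * norm (?M (F i))) powr p) = (\<Sum>i\<in>\<eta>2. (norm (F i) * norm (G' i)) powr p)"
      by (rule sum.cong) (simp_all add: G'U U2)
    also have "(\<Sum>i\<in>\<eta>1. (norm (F i) * norm (G' i)) powr p) + (\<Sum>i\<in>\<eta>2. (norm (F i) * norm (G' i)) powr p)
        = (\<Sum>i\<in>{1..N}. (norm (F i) * norm (G' i)) powr p)"
      unfolding un using fin1 fin2 dj by (simp add: sum.union_disjoint)
    finally have le: "(\<Sum>i\<in>{1..N}. (norm (F i) * norm (?M (F i))) powr p)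
        \<le> (\<Sum>i\<in>{1..N}. (norm (F i) * norm (G' i)) powr p)" by simp
    have "1 / real N * (\<Sum>i\<in>{1..N}. (norm (F i) * norm (?M (F i))) powr p)
        \<le> 1 / real N * (\<Sum>i\<in>{1..N}. (norm (F i) * norm (G' i)) powr p)"
      by (rule mult_left_mono[OF le]) simp
    moreover have "0 \<le> 1 / real N * (\<Sum>i\<in>{1..N}. (norm (F i) * norm (?M (F i))) powr p)"
      by (intro mult_nonneg_nonneg sum_nonneg) auto
    ultimately show ?thesis unfolding AE1p_def
      by (intro powr_mono2) (use p in auto)
  qed
  then show ?thesis unfolding optimal_dual_1p_def using dualG by blast
qed


end
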